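(* Let $p$ be a prime and let $\alpha\in\mathbf{Bad}$ with $\alpha>0$. Then $\alpha$ satisfies the $p$-adic Littlewood Conjecture, i.e. $m_p(\alpha)=0$, if and only if there is a sequence of natural numbers $\{\ell_m\}_{m\in\mathbb{N}}$ such that, for every $m\in\mathbb{N}$, the number $p^{\ell_m}\alpha$ is not an infinite loop mod $p^m$.
   Context: For $\alpha\in\mathbb{R}$ write its simple continued fraction $[a_0;a_1,a_2,\ldots]$ with $a_0\in\mathbb{Z}$, $a_i\in\mathbb{N}$ for $i\ge1$. Convergents $p_k/q_k=[a_0;a_1,\ldots,a_k]$ are given by $p_{-1}=1,q_{-1}=0,p_0=a_0,q_0=1$, $p_k=a_kp_{k-1}+p_{k-2}$, $q_k=a_kq_{k-1}+q_{k-2}$. For $0\le m\le a_{k+1}$ the $\{k,m\}$-th semi-convergent is $p_{\{k,m\}}/q_{\{k,m\}}=(mp_k+p_{k-1})/(mq_k+q_{k-1})=[a_0;a_1,\ldots,a_k,m]$. For $n\in\mathbb{N}$, a real number $\alpha>0$ is an \emph{infinite loop mod $n$} if none of its semi-convergent denominators $q_{\{k,m\}}$ is divisible by $n$, except $q_{-1}=0$. (For rational $\alpha$ both finite expansions are considered and the expansion is regarded as ending with a partial quotient equal to $\infty$, so that after the last convergent all $m\ge0$ are allowed.) $\|x\|$ denotes the distance from $x$ to the nearest integer, $|\cdot|_p$ the $p$-adic absolute value, $m_p(\alpha)=\inf_{q\in\mathbb{N}} q\,|q|_p\,\|q\alpha\|$, and the $p$-adic Littlewood Conjecture for $\alpha$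 is the statement $m_p(\alpha)=0$. $\mathbf{Bad}=\{\alpha\in\mathbb{R}: \inf_{q\in\mathbb{N}} q\|q\alpha\|>0\}$, equivalently the irrationals with bounded partial quotients. *)

theory Defs
  imports "HOL-Analysis.Analysis" "HOL-Computational_Algebra.Computational_Algebra"
begin

text \<open>Index shift: cf_q a j = q_(j-1),
cf_p a j = p_(j-1); so cf_q a 0 = q_(-1) = 0, cf_q a 1 = q_0 = 1.\<close>

fun cf_q :: "(nat \<Rightarrow> int) \<Rightarrow> nat \<Rightarrow> int" where
  "cf_q a 0 = 0"
| "cf_q a (Suc 0) = 1"
| "cf_q a (Suc (Suc j)) = a (Suc j) * cf_q a (Suc j) + cf_q a j"

fun cf_p :: "(nat \<Rightarrow> int) \<Rightarrow> nat \<Rightarrow> int" where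
  "cf_p a 0 = 1"
| "cf_p a (Suc 0) = a 0"
| "cf_p a (Suc (Suc j)) = a (Suc j) * cf_p a (Suc j) + cf_p a j"

text \<open>(a, L) is a simple continued fraction expansion [a_0; a_1, ..., a_L] of x,
where L = \<infinity> for infinite expansions; entries a i with i > L are irrelevant.\<close>

definition cf_expansion :: "real \<Rightarrow> (nat \<Rightarrow> int) \<Rightarrow> enat \<Rightarrow> bool" where
  "cf_expansion x a L \<longleftrightarrow>
     (\<forall>i. 1 \<le> i \<longrightarrow> enat i \<le> L \<longrightarrow> a i \<ge> 1) \<and>
     (if L = \<infinity>
      then (\<lambda>k. real_of_int (cf_p a (Suc k)) / real_of_int (cf_q a (Suc k))) \<longlonglongrightarrow> x
      else x = real_of_int (cf_p a (Suc (the_enat L))) / real_of_int (cf_q a (Suc (the_enat L))))"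

text \<open>Infinite loop mod n: for every expansion of x, no semi-convergent denominator
q_{k,m} = m q_k + q_(k-1) (0 \<le> m \<le> a_(k+1), all m \<ge> 0 after the last
convergent) is divisible by n, except q_{0,0} = q_(-1) = 0.\<close>

definition infinite_loop :: "nat \<Rightarrow> real \<Rightarrow> bool" where
  "infinite_loop n x \<longleftrightarrow>
     (\<forall>a L. cf_expansion x a L \<longrightarrow>
       (\<forall>k m. enat k \<le> L \<longrightarrow> (enat k < L \<longrightarrow> m \<le> a (Suc k)) \<longrightarrow> 0 \<le> m \<longrightarrow>
          (k, m) \<noteq> (0, 0) \<longrightarrow>
          \<not> (int n dvd m * cf_q a (Suc k) + cf_q a k)))"

definition dist_nint :: "real \<Rightarrow> real" where
  "dist_nint x = \<bar>x - real_of_int (round x)\<bar>"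

definition padic_abs :: "nat \<Rightarrow> nat \<Rightarrow> real" where
  "padic_abs p q = (if q = 0 then 0 else 1 / real p ^ multiplicity p q)"

definition m_p :: "nat \<Rightarrow> real \<Rightarrow> real" where
  "m_p p \<alpha> = (INF q\<in>{1::nat..}. real q * padic_abs p q * dist_nint (real q * \<alpha>))"

definition Bad :: "real set" where
  "Bad = {\<alpha>. (INF q\<in>{1::nat..}. real q * dist_nint (real q * \<alpha>)) > 0}"

end

theory Submission
  imports Defs
begin


definition Dv :: "(nat \<Rightarrow> int) \<Rightarrow> real \<Rightarrow> nat \<Rightarrow> real" where
  "Dv a b i = real_of_int (cf_q a i) * b - real_of_int (cf_p a i)"

lemma cf_det: "cf_p a (Suc i) * cf_q a i - cf_p a i * cf_q a (Suc i) = (-1) ^ Suc i"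
proof (induction i)
  case 0 then show ?case by simp
next
  case (Suc i)
  have "cf_p a (Suc (Suc i)) * cf_q a (Suc i) - cf_p a (Suc i) * cf_q a (Suc (Suc i))
      = - (cf_p a (Suc i) * cf_q a i - cf_p a i * cf_q a (Suc i))"
    by (simp add: algebra_simps)
  with Suc show ?case by simp
qed

lemma Dv_rec: "Dv a b (Suc (Suc i)) = real_of_int (a (Suc i)) * Dv a b (Suc i) + Dv a b i"
  by (simp add: Dv_def algebra_simps)

lemma Dv_det: "Dv a b i * real_of_int (cf_q a (Suc i)) - Dv a b (Suc i) * real_of_int (cf_q a i)
   = real_of_int ((-1) ^ Suc i)"
proof -
  have "Dv a b i * real_of_int (cf_q a (Suc i)) - Dv a b (Suc i) * real_of_int (cf_q a i)
     = real_of_int (cf_p a (Suc i) * cf_q a i - cf_p a i * cf_q a (Suc i))"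
    by (simp add: Dv_def algebra_simps)
  then show ?thesis by (simp only: cf_det)
qed

lemma cf_q_pos:
  assumes "\<And>i. 1 \<le> i \<Longrightarrow> a i \<ge> 1"
  shows "cf_q a (Suc i) \<ge> 1 \<and> cf_q a i \<le> cf_q a (Suc i) \<and> 0 \<le> cf_q a i"
proof (induction i)
  case 0 then show ?case by simp
next
  case (Suc i)
  have "a (Suc i) \<ge> 1" using assms by simp
  then have "a (Suc i) * cf_q a (Suc i) \<ge> cf_q a (Suc i)" using Suc
    using mult_right_mono[of 1 "a (Suc i)" "cf_q a (Suc i)"] by simp
  then have "a (Suc i) * cf_q a (Suc i) + cf_q a i \<ge> cf_q a (Suc i)" using Suc by linarith
  then show ?case using Suc by simp
qed

lemma cf_q_grow:
  assumes "\<And>i. 1 \<le> i \<Longrightarrow> a i \<ge> 1"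
  shows "int n \<le> 2 * cf_q a n"
proof (induction n rule: nat_less_induct)
  case (1 n)
  show ?case
  proof (cases n)
    case 0 then show ?thesis by simp
  next
    case (Suc m) note nm = this
    show ?thesis
    proof (cases m)
      case 0 then show ?thesis using nm by simp
    next
      case (Suc j)
      have "a (Suc j) * cf_q a (Suc j) \<ge> cf_q a (Suc j)"
        using cf_q_pos[of a "Suc j", OF assms] assms[of "Suc j"]
          mult_right_mono[of 1 "a (Suc j)" "cf_q a (Suc j)"] by simp
      then have "cf_q a (Suc (Suc j)) \<ge> cf_q a (Suc j) + cf_q a j" by simp
      moreover have "cf_q a (Suc j) \<ge> 1" using cf_q_pos[of a j, OF assms] by simp
      moreover have "int j \<le> 2 * cf_q a j" using 1 nm Suc by auto
      ultimately show ?thesis using nm Suc by (simp del: cf_q.simps)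
    qed
  qed
qed

lemma aux_sign:
  fixes x y q0 q1 :: real
  assumes "x * y \<le> 0" "q0 \<ge> 0" "q1 \<ge> 0" "\<bar>x * q1 - y * q0\<bar> = 1"
  shows "\<bar>x\<bar> * q1 \<le> 1"
proof (cases "x \<ge> 0")
  case True
  show ?thesis
  proof (cases "x = 0")
    case True then show ?thesis by simp
  next
    case False
    with \<open>x \<ge> 0\<close> have "y \<le> 0" using assms(1) by (simp add: mult_le_0_iff)
    then have "y * q0 \<le> 0" using assms(2) by (simp add: mult_nonpos_nonneg)
    moreover have "x * q1 \<ge> 0" using True assms(3) by simp
    ultimately show ?thesis using True assms(4) by linarith
  qed
next
  case False
  then have "y \<ge> 0" using assms(1) by (simp add: mult_le_0_iff)
  then have "y * q0 \<ge> 0" using assms(2) by simp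
  moreover have "x * q1 \<le> 0" using False assms(3) by (simp add: mult_nonpos_nonneg)
  moreover have "\<bar>x\<bar> * q1 = - (x * q1)" using False by simp
  ultimately show ?thesis using assms(4) by linarith
qed

lemma sign_bound:
  assumes "\<And>i. 1 \<le> i \<Longrightarrow> a i \<ge> 1" and "Dv a b i * Dv a b (Suc i) \<le> 0"
  shows "\<bar>Dv a b i\<bar> \<le> 1 / real_of_int (cf_q a (Suc i))"
proof -
  have q1: "real_of_int (cf_q a (Suc i)) \<ge> 1" "real_of_int (cf_q a i) \<ge> 0"
    using cf_q_pos[of a i, OF assms(1)] by auto
  have d: "\<bar>Dv a b i * real_of_int (cf_q a (Suc i)) - Dv a b (Suc i) * real_of_int (cf_q a i)\<bar> = 1"
    by (simp only: Dv_det) (simp add: abs_mult)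
  have "\<bar>Dv a b i\<bar> * real_of_int (cf_q a (Suc i)) \<le> 1"
    by (rule aux_sign[OF assms(2) q1(2) _ d]) (use q1 in simp)
  then show ?thesis using q1 by (simp add: field_simps)
qed



lemma convex_between:
  fixes u v w1 w2 :: real
  assumes "w1 \<ge> 0" "w2 \<ge> 0" "w1 + w2 > 0"
  shows "min u v \<le> (w1 * u + w2 * v) / (w1 + w2) \<and> (w1 * u + w2 * v) / (w1 + w2) \<le> max u v"
proof -
  have "w1 * min u v + w2 * min u v \<le> w1 * u + w2 * v"
    using assms by (intro add_mono mult_left_mono) auto
  moreover have "w1 * u + w2 * v \<le> w1 * max u v + w2 * max u v"
    using assms by (intro add_mono mult_left_mono) auto
  ultimately show ?thesis using assms by (simp add: field_simps)
qed

lemma general_sign: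
  assumes pos: "\<And>i. 1 \<le> i \<Longrightarrow> a i \<ge> 1"
    and lim: "(\<lambda>k. real_of_int (cf_p a (Suc k)) / real_of_int (cf_q a (Suc k))) \<longlonglongrightarrow> b"
    and i1: "i \<ge> 1"
  shows "Dv a b i * Dv a b (Suc i) \<le> 0"
proof -
  define f where "f n = real_of_int (cf_p a n) / real_of_int (cf_q a n)" for n
  define Q where "Q n = real_of_int (cf_q a n)" for n
  define lo where "lo n = min (f n) (f (Suc n))" for n
  define hi where "hi n = max (f n) (f (Suc n))" for n
  have Qpos: "Q n > 0" if n1: "n \<ge> 1" for n
  proof -
    obtain m where "n = Suc m" using n1 by (cases n) auto
    then show ?thesis using cf_q_pos[of a m, OF pos] by (simp add: Q_def)
  qed
  have flim: "f \<longlonglongrightarrow> b" using lim unfolding f_def by (rule LIMSEQ_imp_Suc)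
  have step: "lo j \<le> f (Suc (Suc j)) \<and> f (Suc (Suc j)) \<le> hi j" if "j \<ge> 1" for j
  proof -
    have a1: "real_of_int (a (Suc j)) \<ge> 1" using pos[of "Suc j"] by simp
    have "real_of_int (a (Suc j)) * Q (Suc j) > 0" using a1 Qpos[of "Suc j"] by simp
    have Pf: "real_of_int (cf_p a n) = Q n * f n" if "n \<ge> 1" for n
      using Qpos[OF that] by (simp add: f_def Q_def)
    have "f (Suc (Suc j)) = real_of_int (cf_p a (Suc (Suc j))) / Q (Suc (Suc j))"
      by (simp only: f_def Q_def)
    also have "real_of_int (cf_p a (Suc (Suc j))) = real_of_int (a (Suc j)) * real_of_int (cf_p a (Suc j)) + real_of_int (cf_p a j)"
      by simp
    also have "Q (Suc (Suc j)) = real_of_int (a (Suc j)) * Q (Suc j) + Q j"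
      by (simp add: Q_def)
    finally have "f (Suc (Suc j)) = ((real_of_int (a (Suc j)) * Q (Suc j)) * f (Suc j) + Q j * f j)
        / (real_of_int (a (Suc j)) * Q (Suc j) + Q j)"
      using Pf[of j] Pf[of "Suc j"] that by (simp add: mult.assoc)
    moreover have "min (f (Suc j)) (f j) \<le> ((real_of_int (a (Suc j)) * Q (Suc j)) * f (Suc j) + Q j * f j)
        / (real_of_int (a (Suc j)) * Q (Suc j) + Q j) \<and>
        ((real_of_int (a (Suc j)) * Q (Suc j)) * f (Suc j) + Q j * f j)
        / (real_of_int (a (Suc j)) * Q (Suc j) + Q j) \<le> max (f (Suc j)) (f j)"
      using Qpos[of j] Qpos[of "Suc j"] that a1 by (intro convex_between) (auto simp: add_pos_pos)
    ultimately show ?thesis by (simp add: lo_def hi_def min.commute max.commute)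
  qed
  have mono: "lo i \<le> lo (i + d) \<and> hi (i + d) \<le> hi i" for d
  proof (induction d)
    case 0 then show ?case by simp
  next
    case (Suc d)
    have s: "lo (i + d) \<le> f (Suc (Suc (i + d)))" "f (Suc (Suc (i + d))) \<le> hi (i + d)"
      using step[of "i + d"] i1 by auto
    have "lo (i + d) \<le> lo (Suc (i + d))" unfolding lo_def[of "Suc (i+d)"]
      by (rule min.boundedI) (use s(1) in \<open>auto simp: lo_def\<close>)
    moreover have "hi (Suc (i + d)) \<le> hi (i + d)" unfolding hi_def[of "Suc (i+d)"]
      by (rule max.boundedI) (use s(2) in \<open>auto simp: hi_def\<close>)
    ultimately have "lo (i + d) \<le> lo (Suc (i + d)) \<and> hi (Suc (i + d)) \<le> hi (i + d)" by simp
    then show ?case using Suc by simp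
  qed
  have ev: "lo i \<le> f n \<and> f n \<le> hi i" if ni: "n \<ge> i" for n
  proof -
    obtain d where "n = i + d" using ni le_Suc_ex by blast
    then show ?thesis using mono[of d] by (auto simp: lo_def hi_def)
  qed
  have "lo i \<le> b" by (rule LIMSEQ_le_const[OF flim]) (use ev in blast)
  moreover have "b \<le> hi i" by (rule LIMSEQ_le_const2[OF flim]) (use ev in blast)
  ultimately have "(b - f i) * (b - f (Suc i)) \<le> 0"
    unfolding lo_def hi_def by (auto simp: mult_le_0_iff)
  moreover have "Dv a b i * Dv a b (Suc i) = (Q i * Q (Suc i)) * ((b - f i) * (b - f (Suc i)))"
    using Qpos[of i] Qpos[of "Suc i"] i1 by (simp add: Dv_def f_def Q_def field_simps)
  moreover have "Q i * Q (Suc i) > 0" using Qpos[of i] Qpos[of "Suc i"] i1 by simp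
  ultimately show ?thesis by (simp add: mult_nonneg_nonpos)
qed



lemma general_bound:
  assumes pos: "\<And>i. 1 \<le> i \<Longrightarrow> a i \<ge> 1"
    and lim: "(\<lambda>k. real_of_int (cf_p a (Suc k)) / real_of_int (cf_q a (Suc k))) \<longlonglongrightarrow> b"
  shows "\<bar>Dv a b k\<bar> \<le> 1 / real_of_int (cf_q a (Suc k))"
proof (cases "k = 0")
  case True then show ?thesis by (simp add: Dv_def)
next
  case False
  then show ?thesis using sign_bound[OF pos general_sign[OF pos lim]] by simp
qed

definition cfx :: "real \<Rightarrow> nat \<Rightarrow> real" where
  "cfx b n = ((\<lambda>x. 1 / (x - of_int (floor x))) ^^ n) b"

definition cfa :: "real \<Rightarrow> nat \<Rightarrow> int" where
  "cfa b n = floor (cfx b n)"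

lemma cfx_0: "cfx b 0 = b" by (simp add: cfx_def)
lemma cfx_Suc: "cfx b (Suc n) = 1 / (cfx b n - of_int (cfa b n))"
  by (simp add: cfx_def cfa_def)

lemma cfx_irr:
  assumes "b \<notin> \<rat>"
  shows "cfx b n \<notin> \<rat>"
proof (induction n)
  case 0 then show ?case using assms by (simp add: cfx_0)
next
  case (Suc n)
  have "cfx b n - of_int (cfa b n) \<notin> \<rat>"
  proof
    assume "cfx b n - of_int (cfa b n) \<in> \<rat>"
    then have "cfx b n - of_int (cfa b n) + of_int (cfa b n) \<in> \<rat>" by (intro Rats_add) auto
    then show False using Suc by simp
  qed
  then show ?case unfolding cfx_Suc
    by (metis Rats_1 Rats_divide divide_divide_eq_right div_by_1 mult_1)
qed

lemma frac_pos:
  assumes "b \<notin> \<rat>"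
  shows "0 < cfx b n - of_int (cfa b n) \<and> cfx b n - of_int (cfa b n) < 1"
proof -
  have "cfx b n \<noteq> of_int (cfa b n)" using cfx_irr[OF assms, of n] by auto
  moreover have "of_int (cfa b n) \<le> cfx b n" "cfx b n < of_int (cfa b n) + 1"
    unfolding cfa_def by linarith+
  ultimately show ?thesis by linarith
qed

lemma cfx_gt1:
  assumes "b \<notin> \<rat>"
  shows "cfx b (Suc n) > 1"
  using frac_pos[OF assms, of n] unfolding cfx_Suc by (simp add: field_simps)

lemma cfa_pos:
  assumes "b \<notin> \<rat>" "1 \<le> i"
  shows "cfa b i \<ge> 1"
proof -
  obtain n where "i = Suc n" using assms(2) by (cases i) auto
  then have "cfx b i > 1" using cfx_gt1[OF assms(1)] by simp
  then show ?thesis unfolding cfa_def by linarith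
qed

lemma cfx_key:
  assumes "b \<notin> \<rat>"
  shows "cfx b (Suc k) * Dv (cfa b) b (Suc k) = - Dv (cfa b) b k"
proof (induction k)
  case 0
  have "cfx b 0 - of_int (cfa b 0) > 0" using frac_pos[OF assms, of 0] by simp
  then show ?case by (simp add: cfx_Suc Dv_def cfx_0)
next
  case (Suc k)
  define y where "y = cfx b (Suc (Suc k))"
  define x where "x = cfx b (Suc k)"
  define A where "A = real_of_int (cfa b (Suc k))"
  have fp: "x - A > 0" using frac_pos[OF assms, of "Suc k"] by (simp add: x_def A_def)
  have y: "y = 1 / (x - A)" by (simp add: y_def x_def A_def cfx_Suc)
  have xy: "x = A + 1 / y" using fp by (simp add: y)
  have ypos: "y > 0" using fp y by simp
  have "y * Dv (cfa b) b (Suc (Suc k)) = y * (A * Dv (cfa b) b (Suc k) + Dv (cfa b) b k)"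
    by (simp add: Dv_rec A_def)
  also have "Dv (cfa b) b k = - x * Dv (cfa b) b (Suc k)" using Suc by (simp add: x_def)
  also have "y * (A * Dv (cfa b) b (Suc k) + - x * Dv (cfa b) b (Suc k)) = - Dv (cfa b) b (Suc k)"
    using ypos by (simp add: xy field_simps)
  finally show ?case by (simp add: y_def)
qed

lemma cfa_sign:
  assumes "b \<notin> \<rat>"
  shows "Dv (cfa b) b k * Dv (cfa b) b (Suc k) \<le> 0"
proof -
  have "Dv (cfa b) b k * Dv (cfa b) b (Suc k) = - (cfx b (Suc k) * (Dv (cfa b) b (Suc k))\<^sup>2)"
  proof -
    have "Dv (cfa b) b k = - (cfx b (Suc k) * Dv (cfa b) b (Suc k))"
      using cfx_key[OF assms, of k] by simp
    then show ?thesis by (simp add: power2_eq_square)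
  qed
  moreover have "cfx b (Suc k) > 0" using cfx_gt1[OF assms, of k] by simp
  ultimately show ?thesis by simp
qed

lemma cfa_expansion:
  assumes "b \<notin> \<rat>"
  shows "cf_expansion b (cfa b) \<infinity>"
proof -
  have pos: "\<And>i. 1 \<le> i \<Longrightarrow> cfa b i \<ge> 1" using cfa_pos[OF assms] by blast
  let ?a = "cfa b"
  define Q where "Q n = real_of_int (cf_q ?a n)" for n
  have Q1: "Q (Suc n) \<ge> 1" for n using cf_q_pos[of ?a n, OF pos] by (simp add: Q_def)
  have Qg: "real n \<le> 2 * Q n" for n using cf_q_grow[of ?a n, OF pos] unfolding Q_def
    by (metis of_int_le_iff of_int_mult of_int_numeral of_int_of_nat_eq)
  have est: "norm (real_of_int (cf_p ?a (Suc k)) / Q (Suc k) - b) \<le> 2 * inverse (real (Suc k))" for k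
  proof -
    have "\<bar>Dv ?a b (Suc k)\<bar> \<le> 1 / Q (Suc (Suc k))"
      using sign_bound[OF pos cfa_sign[OF assms], of "Suc k"] by (simp del: cf_q.simps add: Q_def)
    also have "\<dots> \<le> 1" using Q1[of "Suc k"] by simp
    finally have d1: "\<bar>Dv ?a b (Suc k)\<bar> \<le> 1" .
    have "real_of_int (cf_p ?a (Suc k)) / Q (Suc k) - b = - Dv ?a b (Suc k) / Q (Suc k)"
      using Q1[of k] by (simp add: Dv_def Q_def field_simps)
    then have "norm (real_of_int (cf_p ?a (Suc k)) / Q (Suc k) - b) = \<bar>Dv ?a b (Suc k)\<bar> / Q (Suc k)"
      using Q1[of k] by simp
    also have "\<dots> \<le> 1 / Q (Suc k)" using d1 Q1[of k] by (simp add: divide_right_mono)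
    also have "\<dots> \<le> 2 * inverse (real (Suc k))"
      using Qg[of "Suc k"] Q1[of k] by (simp add: field_simps)
    finally show ?thesis .
  qed
  have "(\<lambda>k. 2 * inverse (real (Suc k))) \<longlonglongrightarrow> 0"
    using tendsto_mult_right_zero[OF LIMSEQ_inverse_real_of_nat, of 2] by simp
  then have "(\<lambda>k. real_of_int (cf_p ?a (Suc k)) / Q (Suc k) - b) \<longlonglongrightarrow> 0"
    by (rule Lim_null_comparison[rotated]) (use est in auto)
  then have "(\<lambda>k. real_of_int (cf_p ?a (Suc k)) / Q (Suc k) - b + b) \<longlonglongrightarrow> 0 + b"
    by (intro tendsto_add) auto
  then show ?thesis unfolding cf_expansion_def using pos by (simp add: Q_def)
qed



lemma abs_add_same_sign:
  fixes x y :: real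
  assumes "x * y \<ge> 0"
  shows "\<bar>x + y\<bar> = \<bar>x\<bar> + \<bar>y\<bar>"
  using assms by (cases "x \<ge> 0"; cases "y \<ge> 0") (auto simp: mult_le_0_iff zero_le_mult_iff)

lemma legendre:
  assumes pos: "\<And>i. 1 \<le> i \<Longrightarrow> a i \<ge> 1"
    and sgn: "\<And>k. 1 \<le> k \<Longrightarrow> Dv a b k * Dv a b (Suc k) \<le> 0"
    and Q1: "Q \<ge> 1" and cop: "coprime Q r"
    and close: "real_of_int Q * \<bar>real_of_int Q * b - real_of_int r\<bar> < 1/2"
  shows "\<exists>j. cf_q a j = Q"
proof -
  have ex: "\<exists>n. Q < cf_q a n"
  proof
    show "Q < cf_q a (nat (2 * Q + 1))"
      using cf_q_grow[of a "nat (2 * Q + 1)", OF pos] Q1 by simp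
  qed
  define N where "N = (LEAST n. Q < cf_q a n)"
  have QN: "Q < cf_q a N" unfolding N_def using LeastI_ex[OF ex] .
  have N2: "N \<ge> 2"
  proof (rule ccontr)
    assume "\<not> N \<ge> 2"
    then have "N = 0 \<or> N = 1" by auto
    then show False using QN Q1 by auto
  qed
  define j where "j = N - 1"
  have j1: "j \<ge> 1" and Nj: "N = Suc j" using N2 by (auto simp: j_def)
  have Qj: "cf_q a j \<le> Q"
  proof -
    have "\<not> Q < cf_q a j" unfolding j_def N_def by (rule not_less_Least) (use N2 in \<open>simp add: N_def\<close>)
    then show ?thesis by simp
  qed
  have Qj1: "Q < cf_q a (Suc j)" using QN Nj by simp
  have qjpos: "cf_q a j \<ge> 1"
    using cf_q_pos[of a "j - 1", OF pos] j1 by (cases j) auto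
  define P0 where "P0 = cf_p a j"
  define P1 where "P1 = cf_p a (Suc j)"
  define q0 where "q0 = cf_q a j"
  define q1 where "q1 = cf_q a (Suc j)"
  define d where "d = P1 * q0 - P0 * q1"
  have dd: "d * d = 1" unfolding d_def P0_def P1_def q0_def q1_def cf_det
    by (simp flip: power_add)
  define u where "u = d * (P1 * Q - r * q1)"
  define v where "v = d * (q0 * r - P0 * Q)"
  have eQ: "u * q0 + v * q1 = Q"
  proof -
    have "u * q0 + v * q1 = (d * d) * Q" unfolding u_def v_def d_def by (simp add: algebra_simps)
    then show ?thesis using dd by simp
  qed
  have eR: "u * P0 + v * P1 = r"
  proof -
    have "u * P0 + v * P1 = (d * d) * r" unfolding u_def v_def d_def by (simp add: algebra_simps)
    then show ?thesis using dd by simp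
  qed
  have eD: "real_of_int Q * b - real_of_int r = real_of_int u * Dv a b j + real_of_int v * Dv a b (Suc j)"
  proof -
    have "real_of_int u * Dv a b j + real_of_int v * Dv a b (Suc j)
        = real_of_int (u * q0 + v * q1) * b - real_of_int (u * P0 + v * P1)"
      unfolding Dv_def q0_def q1_def P0_def P1_def by (simp add: algebra_simps)
    then show ?thesis using eQ eR by simp
  qed
  have q0pos: "q0 \<ge> 1" using qjpos by (simp add: q0_def)
  have q1Q: "Q < q1" using Qj1 by (simp add: q1_def)
  have q0Q: "q0 \<le> Q" using Qj by (simp add: q0_def)
  show ?thesis
  proof (cases "v = 0")
    case True
    then have "Q = u * q0" "r = u * P0" using eQ eR by auto
    then have "u dvd Q" "u dvd r" by auto
    then have "is_unit u" using cop by (meson coprime_common_divisor)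
    then have "u = 1 \<or> u = -1" using zdvd1_eq by auto
    moreover have "u > 0"
    proof (rule ccontr)
      assume "\<not> u > 0"
      then have "u * q0 \<le> 0" using q0pos by (simp add: mult_nonpos_nonneg)
      then show False using \<open>Q = u * q0\<close> Q1 by simp
    qed
    ultimately have "u = 1" by auto
    then show ?thesis using \<open>Q = u * q0\<close> by (auto simp: q0_def)
  next
    case False
    have uv: "u * v < 0"
    proof (cases "v > 0")
      case True
      then have "v * q1 \<ge> q1" using q1Q Q1 by (simp add: mult_right_mono[of 1 v q1, simplified])
      then have "u * q0 < 0" using eQ q1Q by linarith
      then have "u < 0" using q0pos by (simp add: mult_less_0_iff)
      then show ?thesis using True by (simp add: mult_neg_pos)
    next
      case f: False
      with False have "v < 0" by simp
      then have "v * q1 < 0" using q1Q Q1 by (simp add: mult_neg_pos)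
      then have "u * q0 > 0" using eQ Q1 by linarith
      then have "u > 0" using q0pos by (simp add: zero_less_mult_iff)
      then show ?thesis using \<open>v < 0\<close> by (simp add: mult_pos_neg)
    qed
    have "(real_of_int u * Dv a b j) * (real_of_int v * Dv a b (Suc j))
        = real_of_int (u * v) * (Dv a b j * Dv a b (Suc j))" by (simp add: algebra_simps)
    also have "\<dots> \<ge> 0"
    proof (rule mult_nonpos_nonpos)
      show "real_of_int (u * v) \<le> 0" using uv by (simp only: of_int_le_0_iff less_imp_le)
    qed (use sgn[OF j1] in auto)
    finally have "\<bar>real_of_int Q * b - real_of_int r\<bar> = \<bar>real_of_int u * Dv a b j\<bar> + \<bar>real_of_int v * Dv a b (Suc j)\<bar>"
      unfolding eD by (rule abs_add_same_sign)
    moreover have "\<bar>real_of_int u * Dv a b j\<bar> \<ge> \<bar>Dv a b j\<bar>"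
    proof -
      have "u \<noteq> 0" using uv by auto
      then have "\<bar>real_of_int u\<bar> \<ge> 1" by linarith
      then have "1 * \<bar>Dv a b j\<bar> \<le> \<bar>real_of_int u\<bar> * \<bar>Dv a b j\<bar>"
        by (intro mult_right_mono) auto
      then show ?thesis by (simp add: abs_mult)
    qed
    ultimately have Dj: "\<bar>Dv a b j\<bar> \<le> \<bar>real_of_int Q * b - real_of_int r\<bar>" by simp
    have "real_of_int (q0 * r - P0 * Q) = real_of_int q0 * (real_of_int r - real_of_int Q * b) + real_of_int Q * Dv a b j"
      by (simp add: Dv_def q0_def P0_def algebra_simps)
    then have "\<bar>real_of_int (q0 * r - P0 * Q)\<bar> \<le> real_of_int q0 * \<bar>real_of_int Q * b - real_of_int r\<bar> + real_of_int Q * \<bar>Dv a b j\<bar>"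
      using q0pos Q1 by (simp add: abs_triangle_ineq[THEN order_trans] abs_mult abs_minus_commute)
    also have "\<dots> \<le> real_of_int Q * \<bar>real_of_int Q * b - real_of_int r\<bar> + real_of_int Q * \<bar>real_of_int Q * b - real_of_int r\<bar>"
      using q0Q Q1 Dj by (intro add_mono mult_right_mono mult_left_mono) auto
    also have "\<dots> < 1" using close by simp
    finally have "\<bar>q0 * r - P0 * Q\<bar> < 1" by linarith
    then have "q0 * r - P0 * Q = 0" by simp
    then have "v = 0" by (simp add: v_def)
    with False show ?thesis by simp
  qed
qed



definition val :: "nat \<Rightarrow> real \<Rightarrow> nat \<Rightarrow> real" where
  "val p \<alpha> q = real q * padic_abs p q * dist_nint (real q * \<alpha>)"

lemma dist_le: "dist_nint x \<le> \<bar>x - real_of_int r\<bar>"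
  unfolding dist_nint_def by (rule round_diff_minimal)

lemma dist_nonneg: "dist_nint x \<ge> 0"
  unfolding dist_nint_def by simp

lemma padic_eq:
  assumes "prime p" "n > 0"
  shows "padic_abs p n = 1 / real p ^ multiplicity p n"
  using assms by (simp add: padic_abs_def)

lemma padic_le:
  assumes "prime p" "n > 0" "p ^ e dvd n"
  shows "padic_abs p n \<le> 1 / real p ^ e"
proof -
  have "e \<le> multiplicity p n"
    using multiplicity_geI[of n p e] assms prime_gt_1_nat[OF assms(1)] by auto
  moreover have "real p \<ge> 1" using prime_gt_1_nat[OF assms(1)] by simp
  ultimately have "real p ^ e \<le> real p ^ multiplicity p n" by (rule power_increasing)
  moreover have "real p ^ e > 0" using prime_gt_1_nat[OF assms(1)] by simp
  ultimately show ?thesis using padic_eq[OF assms(1,2)] by (simp add: frac_le)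
qed

lemma padic_nonneg: "padic_abs p n \<ge> 0"
  by (simp add: padic_abs_def)

lemma val_nonneg: "val p \<alpha> q \<ge> 0"
  unfolding val_def using padic_nonneg dist_nonneg by simp

lemma val_le:
  assumes "prime p" "n > 0" "p ^ e dvd n"
  shows "val p \<alpha> n \<le> real n / real p ^ e * \<bar>real n * \<alpha> - real_of_int r\<bar>"
proof -
  have "val p \<alpha> n = real n * padic_abs p n * dist_nint (real n * \<alpha>)" by (simp add: val_def)
  also have "\<dots> \<le> real n * (1 / real p ^ e) * \<bar>real n * \<alpha> - real_of_int r\<bar>"
    using padic_le[OF assms] dist_le[of "real n * \<alpha>" r] padic_nonneg dist_nonneg
    by (intro mult_mono mult_left_mono) auto
  finally show ?thesis by simp
qed

lemma m_p_le: "n \<ge> 1 \<Longrightarrow> m_p p \<alpha> \<le> val p \<alpha> n"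
  unfolding m_p_def val_def[symmetric]
  by (rule cINF_lower) (auto intro!: bdd_belowI[of _ 0] simp: val_nonneg)

lemma m_p_nonneg: "m_p p \<alpha> \<ge> 0"
  unfolding m_p_def val_def[symmetric]
  by (rule cINF_greatest) (auto simp: val_nonneg)

lemma m_p_small:
  assumes "m_p p \<alpha> < e"
  shows "\<exists>n\<ge>1. val p \<alpha> n < e"
proof -
  have "(INF q\<in>{1::nat..}. val p \<alpha> q) < e" using assms unfolding m_p_def val_def .
  then show ?thesis by (subst (asm) cINF_less_iff) (auto intro!: bdd_belowI[of _ 0] simp: val_nonneg)
qed

lemma Bad_bound:
  assumes "\<alpha> \<in> Bad"
  obtains b where "b > 0" "\<And>n. n \<ge> 1 \<Longrightarrow> b \<le> real n * dist_nint (real n * \<alpha>)"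
proof -
  let ?b = "INF q\<in>{1::nat..}. real q * dist_nint (real q * \<alpha>)"
  have "?b > 0" using assms by (simp add: Bad_def)
  moreover have "?b \<le> real n * dist_nint (real n * \<alpha>)" if "n \<ge> 1" for n
    by (rule cINF_lower) (use that in \<open>auto intro!: bdd_belowI[of _ 0] simp: dist_nonneg\<close>)
  ultimately show ?thesis using that by blast
qed

lemma Bad_irr:
  assumes "\<alpha> \<in> Bad"
  shows "\<alpha> \<notin> \<rat>"
proof
  assume "\<alpha> \<in> \<rat>"
  then obtain r :: int and s :: nat where s: "s > 0" "\<alpha> = real_of_int r / real s"
    by (metis Rats_cases' of_int_of_nat_eq zero_less_imp_eq_int)
  obtain b where b: "b > 0" "\<And>n. n \<ge> 1 \<Longrightarrow> b \<le> real n * dist_nint (real n * \<alpha>)"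
    using Bad_bound[OF assms] by blast
  have "real s * \<alpha> = real_of_int r" using s by simp
  then have "dist_nint (real s * \<alpha>) = 0" by (simp add: dist_nint_def)
  then show False using b(2)[of s] b(1) s by simp
qed



lemma convex_abs:
  fixes m A X Y B :: real
  assumes "0 \<le> m" "m \<le> A" "A > 0" "\<bar>X\<bar> \<le> B" "\<bar>A * Y + X\<bar> \<le> B"
  shows "\<bar>m * Y + X\<bar> \<le> B"
proof -
  define t where "t = m / A"
  have t: "0 \<le> t" "t \<le> 1" using assms by (auto simp: t_def field_simps)
  have "m * Y + X = t * (A * Y + X) + (1 - t) * X" using assms(3) by (simp add: t_def field_simps)
  also have "\<bar>\<dots>\<bar> \<le> t * \<bar>A * Y + X\<bar> + (1 - t) * \<bar>X\<bar>"
    using t by (metis abs_mult abs_of_nonneg abs_triangle_ineq diff_ge_0_iff_ge)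
  also have "\<dots> \<le> t * B + (1 - t) * B"
    using t assms by (intro add_mono mult_left_mono) auto
  finally show ?thesis by (simp add: algebra_simps)
qed

lemma irr_scale:
  assumes "\<alpha> \<notin> \<rat>" "c \<noteq> 0" "c \<in> \<rat>"
  shows "c * \<alpha> \<notin> \<rat>"
proof
  assume "c * \<alpha> \<in> \<rat>"
  then have "(c * \<alpha>) / c \<in> \<rat>" using assms(3) by (rule Rats_divide)
  then show False using assms by simp
qed

lemma back_dir:
  assumes p: "prime p" and irr: "\<alpha> \<notin> \<rat>" and c: "c > 0"
    and cval: "\<And>n. n \<ge> 1 \<Longrightarrow> c \<le> val p \<alpha> n"
    and M: "real p ^ M * (c * c) > 1"
  shows "infinite_loop (p ^ M) (real p ^ l * \<alpha>)"
  unfolding infinite_loop_def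
proof (intro allI impI notI)
  fix a L k and m :: int
  define \<beta> where "\<beta> = real p ^ l * \<alpha>"
  assume exp: "cf_expansion (real p ^ l * \<alpha>) a L"
    and kL: "enat k \<le> L" and mle: "enat k < L \<longrightarrow> m \<le> a (Suc k)" and m0: "0 \<le> m"
    and km: "(k, m) \<noteq> (0, 0)"
    and dv: "int (p ^ M) dvd m * cf_q a (Suc k) + cf_q a k"
  have pg: "real p > 1" using prime_gt_1_nat[OF p] by simp
  have birr: "\<beta> \<notin> \<rat>" unfolding \<beta>_def using irr pg by (intro irr_scale) auto
  have Linf: "L = \<infinity>"
  proof (rule ccontr)
    assume "L \<noteq> \<infinity>"
    then have "\<beta> = real_of_int (cf_p a (Suc (the_enat L))) / real_of_int (cf_q a (Suc (the_enat L)))"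
      using exp unfolding cf_expansion_def \<beta>_def by simp
    then have "\<beta> \<in> \<rat>" by simp
    then show False using birr by simp
  qed
  have pos: "\<And>i. 1 \<le> i \<Longrightarrow> a i \<ge> 1" using exp Linf unfolding cf_expansion_def by simp
  have lim: "(\<lambda>k. real_of_int (cf_p a (Suc k)) / real_of_int (cf_q a (Suc k))) \<longlonglongrightarrow> \<beta>"
    using exp Linf unfolding cf_expansion_def \<beta>_def by simp
  have mA: "m \<le> a (Suc k)" using mle Linf by simp
  define q0 where "q0 = cf_q a k"
  define q1 where "q1 = cf_q a (Suc k)"
  define q2 where "q2 = cf_q a (Suc (Suc k))"
  define q3 where "q3 = cf_q a (Suc (Suc (Suc k)))"
  have q1p: "q1 \<ge> 1" using cf_q_pos[of a k, OF pos] by (simp add: q1_def)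
  have q0p: "q0 \<ge> 0" "q0 \<le> q1" using cf_q_pos[of a k, OF pos] by (auto simp: q0_def q1_def)
  have q2p: "q1 \<le> q2" using cf_q_pos[of a "Suc k", OF pos] by (auto simp: q1_def q2_def)
  have q3p: "q2 \<le> q3" using cf_q_pos[of a "Suc (Suc k)", OF pos] by (auto simp: q3_def q2_def)
  define q where "q = m * q1 + q0"
  define r where "r = m * cf_p a (Suc k) + cf_p a k"
  have qpos: "q \<ge> 1"
  proof (cases "k = 0")
    case True
    then have "m \<noteq> 0" using km by auto
    then show ?thesis using True m0 by (simp add: q_def q1_def q0_def)
  next
    case False
    then have "q0 \<ge> 1" using cf_q_pos[of a "k - 1", OF pos] by (cases k) (auto simp: q0_def)
    moreover have "m * q1 \<ge> 0" using m0 q1p by simp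
    ultimately show ?thesis by (simp add: q_def)
  qed
  have qq2: "q \<le> q2"
  proof -
    have "m * q1 \<le> a (Suc k) * q1" using mA q1p by (intro mult_right_mono) auto
    then show ?thesis by (simp add: q_def q2_def q1_def q0_def)
  qed
  have eq: "real_of_int q * \<beta> - real_of_int r = real_of_int m * Dv a \<beta> (Suc k) + Dv a \<beta> k"
    by (simp add: q_def r_def q1_def q0_def Dv_def algebra_simps)
  have Ak: "real_of_int (a (Suc k)) * Dv a \<beta> (Suc k) + Dv a \<beta> k = Dv a \<beta> (Suc (Suc k))"
    by (simp add: Dv_rec)
  have b0: "\<bar>Dv a \<beta> k\<bar> \<le> 1 / real_of_int q1"
    using general_bound[OF pos lim, of k] by (simp add: q1_def)
  have b1: "\<bar>Dv a \<beta> (Suc k)\<bar> \<le> 1 / real_of_int q2"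
    using general_bound[OF pos lim, of "Suc k"] by (simp del: cf_q.simps add: q2_def)
  have b2: "\<bar>Dv a \<beta> (Suc (Suc k))\<bar> \<le> 1 / real_of_int q1"
  proof -
    have "\<bar>Dv a \<beta> (Suc (Suc k))\<bar> \<le> 1 / real_of_int q3"
      using general_bound[OF pos lim, of "Suc (Suc k)"] by (simp del: cf_q.simps add: q3_def)
    also have "\<dots> \<le> 1 / real_of_int q1" using q1p q2p q3p by (intro divide_left_mono) auto
    finally show ?thesis .
  qed
  have bq: "\<bar>real_of_int q * \<beta> - real_of_int r\<bar> \<le> 1 / real_of_int q1"
    unfolding eq
    by (rule convex_abs[of _ "real_of_int (a (Suc k))"]) (use m0 mA pos[of "Suc k"] b0 b2 Ak in auto)
  have n1: "p ^ l * nat q1 > 0" using q1p pg by simp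
  have "c \<le> val p \<alpha> (p ^ l * nat q1)" using cval[of "p ^ l * nat q1"] n1 by linarith
  also have "\<dots> \<le> real (p ^ l * nat q1) / real p ^ l * \<bar>real (p ^ l * nat q1) * \<alpha> - real_of_int (cf_p a (Suc k))\<bar>"
    by (rule val_le[OF p n1]) simp
  also have "\<dots> = real_of_int q1 * \<bar>Dv a \<beta> (Suc k)\<bar>"
    using q1p pg by (simp add: Dv_def \<beta>_def q1_def mult_ac)
  also have "\<dots> \<le> real_of_int q1 * (1 / real_of_int q2)"
    using b1 q1p by (intro mult_left_mono) auto
  finally have c1: "c \<le> real_of_int q1 / real_of_int q2" by simp
  have n2: "p ^ l * nat q > 0" using qpos pg by simp
  have dvq: "p ^ (l + M) dvd p ^ l * nat q"
  proof -
    have "int (p ^ M) dvd q" using dv by (simp add: q_def q1_def q0_def)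
    moreover have "q = int (nat q)" using qpos by simp
    ultimately have "p ^ M dvd nat q" by (metis of_nat_dvd_iff)
    then show ?thesis by (simp add: power_add)
  qed
  have "c \<le> val p \<alpha> (p ^ l * nat q)" using cval[of "p ^ l * nat q"] n2 by linarith
  also have "\<dots> \<le> real (p ^ l * nat q) / real p ^ (l + M) * \<bar>real (p ^ l * nat q) * \<alpha> - real_of_int r\<bar>"
    by (rule val_le[OF p n2 dvq])
  also have "\<dots> = real_of_int q / real p ^ M * \<bar>real_of_int q * \<beta> - real_of_int r\<bar>"
    using qpos pg by (simp add: \<beta>_def power_add field_simps)
  also have "\<dots> \<le> real_of_int q2 / real p ^ M * (1 / real_of_int q1)"
    using qq2 bq qpos pg by (intro mult_mono divide_right_mono) auto
  finally have c2: "c \<le> real_of_int q2 / (real p ^ M * real_of_int q1)" by simp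
  have "c * c \<le> (real_of_int q1 / real_of_int q2) * (real_of_int q2 / (real p ^ M * real_of_int q1))"
    using c1 c2 c by (intro mult_mono) auto
  also have "\<dots> = 1 / real p ^ M" using q1p q2p pg by (simp add: field_simps)
  finally have "real p ^ M * (c * c) \<le> 1" using pg by (simp add: field_simps)
  then show False using M by simp
qed



lemma fwd_dir:
  assumes p: "prime p" and irr: "\<alpha> \<notin> \<rat>" and b: "b > 0"
    and bb: "\<And>n. n \<ge> 1 \<Longrightarrow> b \<le> real n * dist_nint (real n * \<alpha>)"
    and mp: "m_p p \<alpha> = 0" and M1: "M \<ge> 1"
  shows "\<exists>l\<ge>1. \<not> infinite_loop (p ^ M) (real p ^ l * \<alpha>)"
proof -
  have p2: "p \<ge> 2" using prime_ge_2_nat[OF p] .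
  have pg: "real p > 1" using p2 by simp
  define e where "e = min (b / real p ^ (M + 1)) (1 / (2 * real p ^ M))"
  have e0: "e > 0" using b pg by (simp add: e_def)
  have e1: "e \<le> b / real p ^ (M + 1)" and e2: "e \<le> 1 / (2 * real p ^ M)" by (simp_all add: e_def)
  define Pr where "Pr n \<longleftrightarrow> (\<exists>k u (r::int). n = p ^ k * u \<and> u \<ge> 1 \<and> \<not> p dvd u \<and>
      real u * \<bar>real n * \<alpha> - real_of_int r\<bar> < e)" for n
  have "\<exists>n. Pr n"
  proof -
    obtain n where n1: "n \<ge> 1" and vn: "val p \<alpha> n < e" using m_p_small[of p \<alpha> e] mp e0 by auto
    define k where "k = multiplicity p n"
    have "n \<noteq> 0" "\<not> is_unit p" using n1 p by auto
    then obtain u where nu: "n = p ^ k * u" and pu: "\<not> p dvd u"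
      unfolding k_def using multiplicity_decompose' by metis
    have u1: "u \<ge> 1" using nu n1 by (cases u) auto
    define r where "r = round (real n * \<alpha>)"
    have "val p \<alpha> n = real n * (1 / real p ^ k) * \<bar>real n * \<alpha> - real_of_int r\<bar>"
      using n1 by (simp add: val_def padic_eq[OF p] k_def dist_nint_def r_def)
    also have "\<dots> = real u * \<bar>real n * \<alpha> - real_of_int r\<bar>" using nu pg by simp
    finally have "Pr n" unfolding Pr_def using nu u1 pu vn by auto
    then show ?thesis ..
  qed
  then obtain n where Pn: "Pr n" and minP: "\<And>n'. n' < n \<Longrightarrow> \<not> Pr n'"
    using exists_least_iff[of Pr] by blast
  then obtain k u r where nu: "n = p ^ k * u" and u1: "u \<ge> 1" and pu: "\<not> p dvd u"
    and small: "real u * \<bar>real n * \<alpha> - real_of_int r\<bar> < e"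
    unfolding Pr_def by blast
  have n1: "n \<ge> 1" using nu u1 p2 by simp
  have kM: "k \<ge> M + 1"
  proof (rule ccontr)
    assume "\<not> k \<ge> M + 1"
    then have "real p ^ k \<le> real p ^ (M + 1)" using pg by (intro power_increasing) auto
    have "b \<le> real n * dist_nint (real n * \<alpha>)" using bb n1 by simp
    also have "\<dots> \<le> real n * \<bar>real n * \<alpha> - real_of_int r\<bar>" by (intro mult_left_mono dist_le) auto
    also have "\<dots> = real p ^ k * (real u * \<bar>real n * \<alpha> - real_of_int r\<bar>)" by (simp add: nu)
    also have "\<dots> < real p ^ k * e" using small pg by (intro mult_strict_left_mono) auto
    also have "\<dots> \<le> real p ^ (M + 1) * (b / real p ^ (M + 1))"
      using \<open>real p ^ k \<le> real p ^ (M + 1)\<close> e1 e0 pg by (intro mult_mono) auto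
    also have "\<dots> = b" using pg by simp
    finally show False by simp
  qed
  have npr: "\<not> int p dvd r"
  proof
    assume "int p dvd r"
    then obtain r' where r': "r = int p * r'" by blast
    define n' where "n' = p ^ (k - 1) * u"
    have nn: "n = p * n'" using kM by (simp add: nu n'_def power_eq_if)
    have "real u * \<bar>real n' * \<alpha> - real_of_int r'\<bar> = real u * \<bar>real n * \<alpha> - real_of_int r\<bar> / real p"
    proof -
      have "real n * \<alpha> - real_of_int r = real p * (real n' * \<alpha> - real_of_int r')"
        by (simp add: nn r' algebra_simps)
      then show ?thesis using pg by (simp add: abs_mult)
    qed
    also have "\<dots> \<le> real u * \<bar>real n * \<alpha> - real_of_int r\<bar>"
    proof -
      have "real u * \<bar>real n * \<alpha> - real_of_int r\<bar> * 1 \<le> real u * \<bar>real n * \<alpha> - real_of_int r\<bar> * real p"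
        using pg by (intro mult_left_mono) auto
      then show ?thesis using pg by (simp add: divide_le_eq)
    qed
    finally have "real u * \<bar>real n' * \<alpha> - real_of_int r'\<bar> < e" using small by linarith
    then have "Pr n'" unfolding Pr_def using u1 pu n'_def by blast
    moreover have "n' < n" using nn p2 n1 by simp
    ultimately show False using minP by blast
  qed
  have cop_ur: "coprime (int u) r"
  proof (rule ccontr)
    assume nc: "\<not> coprime (int u) r"
    define g where "g = gcd (int u) r"
    have g0: "g \<ge> 0" by (simp add: g_def)
    have g1: "g \<noteq> 1" using nc by (simp add: g_def coprime_iff_gcd_eq_1)
    have gn0: "g \<noteq> 0" using u1 by (simp add: g_def)
    have g2: "g \<ge> 2" using g0 g1 gn0 by linarith
    obtain u'' where u'': "int u = g * u''" unfolding g_def by (metis gcd_dvd1 dvd_def)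
    obtain r' where r': "r = g * r'" unfolding g_def by (metis gcd_dvd2 dvd_def)
    have u''pos: "u'' \<ge> 1"
    proof (rule ccontr)
      assume "\<not> u'' \<ge> 1"
      then have "u'' \<le> 0" by simp
      then have "g * u'' \<le> 0" using g0 by (simp add: mult_nonneg_nonpos)
      then show False using u'' u1 by simp
    qed
    define u' where "u' = nat u''"
    have uu: "int u = g * int u'" using u'' u''pos by (simp add: u'_def)
    have u'1: "u' \<ge> 1" using u''pos by (simp add: u'_def)
    have u'lt: "u' < u"
    proof -
      have "int u' * 1 < int u' * g" using u'1 g2 by (intro mult_strict_left_mono) auto
      then show ?thesis using uu by (simp add: mult.commute)
    qed
    have pu': "\<not> p dvd u'"
    proof
      assume "p dvd u'"
      moreover have "u' dvd u"
      proof -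
        have "int u' dvd int u" using uu by simp
        then show ?thesis by (simp only: of_nat_dvd_iff)
      qed
      ultimately show False using pu by (meson dvd_trans)
    qed
    define n' where "n' = p ^ k * u'"
    have rg: "real u = real_of_int g * real u'" using uu by (metis of_int_mult of_int_of_nat_eq)
    have rn: "real n = real_of_int g * real n'" using rg by (simp add: nu n'_def)
    have "real n * \<alpha> - real_of_int r = real_of_int g * (real n' * \<alpha> - real_of_int r')"
      by (simp add: rn r' algebra_simps)
    then have "real u * \<bar>real n * \<alpha> - real_of_int r\<bar> = (real_of_int g * real_of_int g) * (real u' * \<bar>real n' * \<alpha> - real_of_int r'\<bar>)"
      using g0 by (simp add: abs_mult rg)
    moreover have G1: "real_of_int g * real_of_int g \<ge> 1"
    proof -
      have "real_of_int g \<ge> 1" using g2 by simp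
      then have "1 * 1 \<le> real_of_int g * real_of_int g" by (intro mult_mono) auto
      then show ?thesis by simp
    qed
    moreover have "real u' * \<bar>real n' * \<alpha> - real_of_int r'\<bar> \<ge> 0" by simp
    ultimately have "real u' * \<bar>real n' * \<alpha> - real_of_int r'\<bar> \<le> real u * \<bar>real n * \<alpha> - real_of_int r\<bar>"
      using mult_right_mono[OF G1, of "real u' * \<bar>real n' * \<alpha> - real_of_int r'\<bar>"] by simp
    then have "real u' * \<bar>real n' * \<alpha> - real_of_int r'\<bar> < e" using small by linarith
    then have "Pr n'" unfolding Pr_def using u'1 pu' n'_def by blast
    moreover have "n' < n" using u'lt p2 by (simp add: nu n'_def)
    ultimately show False using minP by blast
  qed
  define l where "l = k - M"
  have l1: "l \<ge> 1" using kM by (simp add: l_def)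
  define \<beta> where "\<beta> = real p ^ l * \<alpha>"
  define Q where "Q = int (p ^ M * u)"
  have birr: "\<beta> \<notin> \<rat>" unfolding \<beta>_def using irr pg by (intro irr_scale) auto
  have Q1: "Q \<ge> 1"
  proof -
    have "int p ^ M \<ge> 1" using p2 by (intro one_le_power) simp
    moreover have "int u \<ge> 1" using u1 by simp
    ultimately have "1 * 1 \<le> int p ^ M * int u" by (intro mult_mono) auto
    then show ?thesis by (simp add: Q_def)
  qed
  have copQ: "coprime Q r"
  proof -
    have "coprime (int p) r" using npr p by (simp add: prime_imp_coprime prime_nat_iff_prime)
    then have "coprime (int p ^ M) r" by simp
    then show ?thesis using cop_ur by (simp add: Q_def)
  qed
  have Qb: "real_of_int Q * \<beta> = real n * \<alpha>"
  proof -
    have "k = M + l" using kM by (simp add: l_def)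
    then show ?thesis by (simp add: Q_def \<beta>_def nu power_add)
  qed
  have close: "real_of_int Q * \<bar>real_of_int Q * \<beta> - real_of_int r\<bar> < 1/2"
  proof -
    have "real_of_int Q * \<bar>real_of_int Q * \<beta> - real_of_int r\<bar> = real p ^ M * (real u * \<bar>real n * \<alpha> - real_of_int r\<bar>)"
      by (simp add: Qb) (simp add: Q_def)
    also have "\<dots> < real p ^ M * e" using small pg by (intro mult_strict_left_mono) auto
    also have "\<dots> \<le> real p ^ M * (1 / (2 * real p ^ M))" using e2 pg by (intro mult_left_mono) auto
    also have "\<dots> = 1/2" using pg by simp
    finally show ?thesis .
  qed
  obtain j where j: "cf_q (cfa \<beta>) j = Q"
    using legendre[OF cfa_pos[OF birr] cfa_sign[OF birr] Q1 copQ close] by blast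
  have j0: "j \<noteq> 0"
  proof
    assume "j = 0"
    then have "Q = 0" using j by simp
    then show False using Q1 by simp
  qed
  have "\<not> infinite_loop (p ^ M) \<beta>"
    unfolding infinite_loop_def
  proof
    assume H: "\<forall>a L. cf_expansion \<beta> a L \<longrightarrow> (\<forall>k m. enat k \<le> L \<longrightarrow> (enat k < L \<longrightarrow> m \<le> a (Suc k)) \<longrightarrow> 0 \<le> m \<longrightarrow>
          (k, m) \<noteq> (0, 0) \<longrightarrow> \<not> int (p ^ M) dvd m * cf_q a (Suc k) + cf_q a k)"
    have "\<not> int (p ^ M) dvd 0 * cf_q (cfa \<beta>) (Suc j) + cf_q (cfa \<beta>) j"
      using H[rule_format, OF cfa_expansion[OF birr], of j 0] j0 cfa_pos[OF birr, of "Suc j"] by simp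
    then show False using j by (simp add: Q_def)
  qed
  then show ?thesis using l1 unfolding \<beta>_def by blast
qed



theorem theorem3p1:
  fixes p :: nat and \<alpha> :: real
  assumes "prime p" and "\<alpha> \<in> Bad" and "\<alpha> > 0"
  shows "m_p p \<alpha> = 0 \<longleftrightarrow>
    (\<exists>l :: nat \<Rightarrow> nat. \<forall>m\<ge>1. l m \<ge> 1 \<and>
        \<not> infinite_loop (p ^ m) (real p ^ l m * \<alpha>))"
proof
  assume mp: "m_p p \<alpha> = 0"
  obtain b where b: "b > 0" "\<And>n. n \<ge> 1 \<Longrightarrow> b \<le> real n * dist_nint (real n * \<alpha>)"
    using Bad_bound[OF assms(2)] by blast
  have "\<forall>m. \<exists>l. m \<ge> 1 \<longrightarrow> l \<ge> 1 \<and> \<not> infinite_loop (p ^ m) (real p ^ l * \<alpha>)"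
  proof
    fix m :: nat
    show "\<exists>l. m \<ge> 1 \<longrightarrow> l \<ge> 1 \<and> \<not> infinite_loop (p ^ m) (real p ^ l * \<alpha>)"
    proof (cases "m \<ge> 1")
      case True
      then show ?thesis using fwd_dir[OF assms(1) Bad_irr[OF assms(2)] b(1) b(2) mp True] by blast
    qed auto
  qed
  then obtain l where "\<forall>m. m \<ge> 1 \<longrightarrow> l m \<ge> 1 \<and> \<not> infinite_loop (p ^ m) (real p ^ l m * \<alpha>)"
    by metis
  then show "\<exists>l :: nat \<Rightarrow> nat. \<forall>m\<ge>1. l m \<ge> 1 \<and> \<not> infinite_loop (p ^ m) (real p ^ l m * \<alpha>)"
    by blast
next
  assume H: "\<exists>l :: nat \<Rightarrow> nat. \<forall>m\<ge>1. l m \<ge> 1 \<and> \<not> infinite_loop (p ^ m) (real p ^ l m * \<alpha>)"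
  then obtain l :: "nat \<Rightarrow> nat" where l: "\<And>m. m \<ge> 1 \<Longrightarrow> \<not> infinite_loop (p ^ m) (real p ^ l m * \<alpha>)"
    by blast
  show "m_p p \<alpha> = 0"
  proof (rule ccontr)
    assume ne: "m_p p \<alpha> \<noteq> 0"
    define c where "c = m_p p \<alpha>"
    have c0: "c > 0" using ne m_p_nonneg[of p \<alpha>] by (simp add: c_def)
    have cval: "\<And>n. n \<ge> 1 \<Longrightarrow> c \<le> val p \<alpha> n" unfolding c_def by (rule m_p_le)
    have pg: "real p > 1" using prime_gt_1_nat[OF assms(1)] by simp
    obtain M0 where M0: "1 / (c * c) < real p ^ M0" using real_arch_pow[OF pg] by blast
    define M where "M = Suc M0"
    have "real p ^ M0 \<le> real p ^ M" using pg by (intro power_increasing) (auto simp: M_def)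
    with M0 have "1 / (c * c) < real p ^ M" by linarith
    then have MM: "real p ^ M * (c * c) > 1" using c0 by (simp add: field_simps)
    have "infinite_loop (p ^ M) (real p ^ l M * \<alpha>)"
      by (rule back_dir[OF assms(1) Bad_irr[OF assms(2)] c0 cval MM])
    moreover have "\<not> infinite_loop (p ^ M) (real p ^ l M * \<alpha>)" using l[of M] by (simp add: M_def)
    ultimately show False by simp
  qed
qed


end
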